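(* Let $m < n$ be positive integers. If the $m \times n$ Domineering board has outcome ${\rm 2nd}$ or $V$, then the $(n-m) \times n$ board does not have outcome $V$.
   Context: Domineering on an $a \times b$ board (a rectangle of $a$ rows and $b$ columns of unit cells): two players, Vera and Hepzibah, alternately place dominoes on empty cells; Vera places vertical dominoes (covering two vertically adjacent empty cells), Hepzibah places horizontal dominoes (covering two horizontally adjacent empty cells). A player who cannot move on her turn loses. The outcome class is $V$ if Vera wins with optimal play regardless of who moves first, $H$ if Hepzibah wins regardless of who moves first, ${\rm 1st}$ if the first player wins, and ${\rm 2nd}$ if the second player wins. *)

theory Defs
  imports Main
begin

definition board :: "nat \<Rightarrow> nat \<Rightarrow> (nat \<times> nat) set" where
  "board a b = {(i, j). i < a \<and> j < b}"

text \<open>Domino covered by a move at cell (i,j): vertical (Vera) covers (i,j),(i+1,j);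
  horizontal (Hepzibah) covers (i,j),(i,j+1).\<close>

definition domino :: "bool \<Rightarrow> nat \<times> nat \<Rightarrow> (nat \<times> nat) set" where
  "domino vera c = (if vera then {c, (fst c + 1, snd c)} else {c, (fst c, snd c + 1)})"

definition moves :: "bool \<Rightarrow> (nat \<times> nat) set \<Rightarrow> (nat \<times> nat) set set" where
  "moves vera S = {S - domino vera c | c. domino vera c \<subseteq> S}"

text \<open>wins v S: the player to move (Vera if v, else Hepzibah) wins with optimal play
  from the position with empty cells S (normal play: no move means loss).\<close>

lemma moves_card_less:
  assumes f: "finite S" and T: "T \<in> moves v S"
  shows "card T < card S"
proof -
  obtain c where c: "domino v c \<subseteq> S" "T = S - domino v c"
    using T unfolding moves_def by blast
  have ne: "domino v c \<noteq> {}" by (simp add: domino_def)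
  have "T \<subset> S" using c ne by blast
  then show ?thesis using f by (simp add: psubset_card_mono)
qed

function wins :: "bool \<Rightarrow> (nat \<times> nat) set \<Rightarrow> bool" where
  "wins v S = (if finite S then (\<exists>T\<in>moves v S. \<not> wins (\<not> v) T) else False)"
  by auto
termination
  by (relation "measure (\<lambda>(v, S). card S)") (auto simp: moves_card_less)

definition vera_first_wins :: "nat \<Rightarrow> nat \<Rightarrow> bool" where
  "vera_first_wins a b = wins True (board a b)"

definition hep_first_wins :: "nat \<Rightarrow> nat \<Rightarrow> bool" where
  "hep_first_wins a b = wins False (board a b)"

definition outcome_V :: "nat \<Rightarrow> nat \<Rightarrow> bool" where
  "outcome_V a b \<longleftrightarrow> vera_first_wins a b \<and> \<not> hep_first_wins a b"

definition outcome_H :: "nat \<Rightarrow> nat \<Rightarrow> bool" where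
  "outcome_H a b \<longleftrightarrow> \<not> vera_first_wins a b \<and> hep_first_wins a b"

definition outcome_1st :: "nat \<Rightarrow> nat \<Rightarrow> bool" where
  "outcome_1st a b \<longleftrightarrow> vera_first_wins a b \<and> hep_first_wins a b"

definition outcome_2nd :: "nat \<Rightarrow> nat \<Rightarrow> bool" where
  "outcome_2nd a b \<longleftrightarrow> \<not> vera_first_wins a b \<and> \<not> hep_first_wins a b"

end

theory Submission
  imports Defs
begin

declare wins.simps[simp del]

lemma wins_iso:
  assumes inj: "inj f"
    and dom: "\<And>v c. f ` domino v c = domino (v \<noteq> b) (f c)"
    and rng: "\<And>v d. d \<in> range f \<Longrightarrow> True"
  shows "finite S \<Longrightarrow> wins (v \<noteq> b) (f ` S) = wins v S"
proof (induction "card S" arbitrary: S v rule: less_induct)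
  case less
  have mv: "moves (v \<noteq> b) (f ` S) = (image f) ` moves v S"
  proof
    show "moves (v \<noteq> b) (f ` S) \<subseteq> (image f) ` moves v S"
    proof
      fix T assume "T \<in> moves (v \<noteq> b) (f ` S)"
      then obtain d where d: "domino (v \<noteq> b) d \<subseteq> f ` S" "T = f ` S - domino (v \<noteq> b) d"
        unfolding moves_def by blast
      have "d \<in> domino (v \<noteq> b) d" by (simp add: domino_def)
      then obtain c where c: "d = f c" using d(1) by blast
      have e: "domino (v \<noteq> b) d = f ` domino v c" using dom c by simp
      have "domino v c \<subseteq> S" using d(1) e inj by (metis inj_image_subset_iff)
      moreover have "T = f ` (S - domino v c)" using d(2) e inj by (simp add: image_set_diff)
      ultimately show "T \<in> (image f) ` moves v S" unfolding moves_def by blast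
    qed
  next
    show "(image f) ` moves v S \<subseteq> moves (v \<noteq> b) (f ` S)"
    proof
      fix T assume "T \<in> (image f) ` moves v S"
      then obtain c where c: "domino v c \<subseteq> S" "T = f ` (S - domino v c)"
        unfolding moves_def by blast
      have "f ` domino v c \<subseteq> f ` S" using c(1) by (rule image_mono)
      then have "domino (v \<noteq> b) (f c) \<subseteq> f ` S" using dom[of v c] by simp
      moreover have "T = f ` S - domino (v \<noteq> b) (f c)" using c(2) dom[of v c] inj
        by (simp add: image_set_diff)
      ultimately show "T \<in> moves (v \<noteq> b) (f ` S)" unfolding moves_def by blast
    qed
  qed
  have IH: "\<And>T. T \<in> moves v S \<Longrightarrow> wins (\<not> (v \<noteq> b)) (f ` T) = wins (\<not> v) T"
  proof -
    fix T assume T: "T \<in> moves v S"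
    have c: "card T < card S" using moves_card_less[OF less.prems T] .
    have fT: "finite T" using T less.prems unfolding moves_def by auto
    have e: "wins ((\<not> v) \<noteq> b) (f ` T) = wins (\<not> v) T" using less.hyps[OF c fT] .
    have "((\<not> v) \<noteq> b) = (\<not> (v \<noteq> b))" by auto
    then show "wins (\<not> (v \<noteq> b)) (f ` T) = wins (\<not> v) T" using e by simp
  qed
  have fin: "finite (f ` S)" using less.prems by simp
  have ex: "(\<exists>T'\<in>moves (v \<noteq> b) (f ` S). \<not> wins (\<not> (v \<noteq> b)) T') = (\<exists>T\<in>moves v S. \<not> wins (\<not> v) T)"
  proof
    assume "\<exists>T'\<in>moves (v \<noteq> b) (f ` S). \<not> wins (\<not> (v \<noteq> b)) T'"
    then obtain T where T: "T \<in> moves v S" "\<not> wins (\<not> (v \<noteq> b)) (f ` T)" unfolding mv by blast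
    then show "\<exists>T\<in>moves v S. \<not> wins (\<not> v) T" using IH[OF T(1)] by blast
  next
    assume "\<exists>T\<in>moves v S. \<not> wins (\<not> v) T"
    then obtain T where T: "T \<in> moves v S" "\<not> wins (\<not> v) T" by blast
    then have "f ` T \<in> moves (v \<noteq> b) (f ` S)" "\<not> wins (\<not> (v \<noteq> b)) (f ` T)"
      using mv T(1) IH[OF T(1)] T(2) by (blast, simp)
    then show "\<exists>T'\<in>moves (v \<noteq> b) (f ` S). \<not> wins (\<not> (v \<noteq> b)) T'" by blast
  qed
  have l: "wins (v \<noteq> b) (f ` S) = (\<exists>T'\<in>moves (v \<noteq> b) (f ` S). \<not> wins (\<not> (v \<noteq> b)) T')"
    by (subst wins.simps) (simp only: fin if_True)
  have r: "wins v S = (\<exists>T\<in>moves v S. \<not> wins (\<not> v) T)"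
    by (subst wins.simps) (simp only: less.prems if_True)
  show ?case using l r ex by simp
qed

definition U :: "nat \<Rightarrow> (nat \<times> nat) set" where "U m = {c. fst c < m}"

lemma split_moves:
  assumes "X \<subseteq> U m" "Y \<inter> U m = {}" "T \<in> moves False (X \<union> Y)"
  shows "(\<exists>X'\<in>moves False X. T = X' \<union> Y) \<or> (\<exists>Y'\<in>moves False Y. T = X \<union> Y')"
proof -
  obtain c where c: "domino False c \<subseteq> X \<union> Y" "T = (X \<union> Y) - domino False c"
    using assms(3) unfolding moves_def by blast
  show ?thesis
  proof (cases "fst c < m")
    case True
    then have "domino False c \<subseteq> U m" by (auto simp: domino_def U_def)
    then have "domino False c \<subseteq> X" "domino False c \<inter> Y = {}" using c(1) assms(2) by auto
    then have "X - domino False c \<in> moves False X" "T = (X - domino False c) \<union> Y"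
      using c(2) unfolding moves_def by blast+
    then show ?thesis by blast
  next
    case False
    then have "domino False c \<inter> U m = {}" by (auto simp: domino_def U_def)
    then have "domino False c \<subseteq> Y" "domino False c \<inter> X = {}" using c(1) assms(1) by auto
    then have "Y - domino False c \<in> moves False Y" "T = X \<union> (Y - domino False c)"
      using c(2) unfolding moves_def by blast+
    then show ?thesis by blast
  qed
qed

lemma lift_left:
  assumes "X \<inter> Y = {}" "X' \<in> moves v X"
  shows "X' \<union> Y \<in> moves v (X \<union> Y)"
proof -
  obtain c where c: "domino v c \<subseteq> X" "X' = X - domino v c"
    using assms(2) unfolding moves_def by blast
  then have "X' \<union> Y = (X \<union> Y) - domino v c" using assms(1) by auto
  then show ?thesis using c(1) unfolding moves_def by blast
qed

lemma lift_right:
  assumes "X \<inter> Y = {}" "Y' \<in> moves v Y"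
  shows "X \<union> Y' \<in> moves v (X \<union> Y)"
  using lift_left[of Y X Y' v] assms by (simp add: Un_commute Int_commute)

lemma moves_sub: "X' \<in> moves v X \<Longrightarrow> X' \<subseteq> X"
  unfolding moves_def by auto

lemma sum_lemma:
  "finite X \<Longrightarrow> finite Y \<Longrightarrow> X \<subseteq> U m \<Longrightarrow> Y \<inter> U m = {} \<Longrightarrow>
   (\<not> wins False X \<and> \<not> wins False Y \<longrightarrow> \<not> wins False (X \<union> Y)) \<and>
   (\<not> wins False X \<and> wins True Y \<longrightarrow> wins True (X \<union> Y)) \<and>
   (wins True X \<and> \<not> wins False Y \<longrightarrow> wins True (X \<union> Y))"
proof (induction "card X + card Y" arbitrary: X Y rule: less_induct)
  case less
  note fX = less.prems(1) and fY = less.prems(2) and XU = less.prems(3) and YU = less.prems(4)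
  have disj: "X \<inter> Y = {}" using XU YU by auto
  have finU: "finite (X \<union> Y)" using fX fY by simp
  have IHX: "\<And>X'. X' \<in> moves v X \<Longrightarrow>
   (\<not> wins False X' \<and> \<not> wins False Y \<longrightarrow> \<not> wins False (X' \<union> Y)) \<and>
   (\<not> wins False X' \<and> wins True Y \<longrightarrow> wins True (X' \<union> Y)) \<and>
   (wins True X' \<and> \<not> wins False Y \<longrightarrow> wins True (X' \<union> Y))" for v
  proof -
    fix X' assume h: "X' \<in> moves v X"
    have c1: "card X' < card X" using moves_card_less[OF fX h] .
    have s1: "X' \<subseteq> X" using moves_sub[OF h] .
    have f1: "finite X'" using s1 fX by (rule finite_subset)
    have u1: "X' \<subseteq> U m" using s1 XU by (rule order_trans)
    have l1: "card X' + card Y < card X + card Y" using c1 by simp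
    show "?thesis X'" by (rule less.hyps[OF l1 f1 fY u1 YU])
  qed
  have IHY: "\<And>Y'. Y' \<in> moves v Y \<Longrightarrow>
   (\<not> wins False X \<and> \<not> wins False Y' \<longrightarrow> \<not> wins False (X \<union> Y')) \<and>
   (\<not> wins False X \<and> wins True Y' \<longrightarrow> wins True (X \<union> Y')) \<and>
   (wins True X \<and> \<not> wins False Y' \<longrightarrow> wins True (X \<union> Y'))" for v
  proof -
    fix Y' assume h: "Y' \<in> moves v Y"
    have c1: "card Y' < card Y" using moves_card_less[OF fY h] .
    have s1: "Y' \<subseteq> Y" using moves_sub[OF h] .
    have u1: "Y' \<inter> U m = {}" using s1 YU by auto
    have f1: "finite Y'" using s1 fY by (rule finite_subset)
    have l1: "card X + card Y' < card X + card Y" using c1 by simp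
    show "?thesis Y'" by (rule less.hyps[OF l1 fX f1 XU u1])
  qed
  have wF: "\<And>Z. finite Z \<Longrightarrow> wins False Z = (\<exists>T\<in>moves False Z. \<not> wins True T)"
    by (subst wins.simps) simp
  have wT: "\<And>Z. finite Z \<Longrightarrow> wins True Z = (\<exists>T\<in>moves True Z. \<not> wins False T)"
    by (subst wins.simps) simp
  have A: "\<not> wins False X \<and> \<not> wins False Y \<longrightarrow> \<not> wins False (X \<union> Y)"
  proof
    assume h: "\<not> wins False X \<and> \<not> wins False Y"
    show "\<not> wins False (X \<union> Y)"
      unfolding wF[OF finU]
    proof
      assume "\<exists>T\<in>moves False (X \<union> Y). \<not> wins True T"
      then obtain T where T: "T \<in> moves False (X \<union> Y)" "\<not> wins True T" by blast
      from split_moves[OF XU YU T(1)] show False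
      proof
        assume "\<exists>X'\<in>moves False X. T = X' \<union> Y"
        then obtain X' where X': "X' \<in> moves False X" "T = X' \<union> Y" by blast
        have "wins True X'" using h X' wF[OF fX] by blast
        then show False using IHX[OF X'(1)] h X' T(2) by blast
      next
        assume "\<exists>Y'\<in>moves False Y. T = X \<union> Y'"
        then obtain Y' where Y': "Y' \<in> moves False Y" "T = X \<union> Y'" by blast
        have "wins True Y'" using h Y' wF[OF fY] by blast
        then show False using IHY[OF Y'(1)] h Y' T(2) by blast
      qed
    qed
  qed
  have B: "\<not> wins False X \<and> wins True Y \<longrightarrow> wins True (X \<union> Y)"
  proof
    assume h: "\<not> wins False X \<and> wins True Y"
    then obtain Y' where Y': "Y' \<in> moves True Y" "\<not> wins False Y'" using wT[OF fY] by blast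
    have "\<not> wins False (X \<union> Y')" using IHY[OF Y'(1)] h Y'(2) by blast
    moreover have "X \<union> Y' \<in> moves True (X \<union> Y)" using lift_right[OF disj Y'(1)] .
    ultimately show "wins True (X \<union> Y)" using wT[OF finU] by blast
  qed
  have C: "wins True X \<and> \<not> wins False Y \<longrightarrow> wins True (X \<union> Y)"
  proof
    assume h: "wins True X \<and> \<not> wins False Y"
    then obtain X' where X': "X' \<in> moves True X" "\<not> wins False X'" using wT[OF fX] by blast
    have "\<not> wins False (X' \<union> Y)" using IHX[OF X'(1)] h X'(2) by blast
    moreover have "X' \<union> Y \<in> moves True (X \<union> Y)" using lift_left[OF disj X'(1)] .
    ultimately show "wins True (X \<union> Y)" using wT[OF finU] by blast
  qed
  show ?case using A B C by blast
qed

lemma finite_board: "finite (board a b)"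
proof -
  have "board a b \<subseteq> {..<a} \<times> {..<b}" unfolding board_def by auto
  then show ?thesis by (rule finite_subset) simp
qed

theorem mainTheorem12:
  fixes m n :: nat
  assumes "0 < m" and "m < n"
    and "outcome_2nd m n \<or> outcome_V m n"
  shows "\<not> outcome_V (n - m) n"
proof
  assume V: "outcome_V (n - m) n"
  define sh :: "nat \<times> nat \<Rightarrow> nat \<times> nat" where "sh = (\<lambda>c. (fst c + m, snd c))"
  have injsh: "inj sh" unfolding sh_def inj_def by auto
  have domsh: "\<And>v c. sh ` domino v c = domino (v \<noteq> False) (sh c)"
    unfolding sh_def domino_def by (case_tac v) auto
  have shw: "\<And>v. wins v (sh ` board (n - m) n) = wins v (board (n - m) n)"
    using wins_iso[OF injsh domsh _ finite_board] by simp
  have injsw: "inj prod.swap" by simp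
  have domsw: "\<And>v c. prod.swap ` domino v c = domino (v \<noteq> True) (prod.swap c)"
    unfolding domino_def by (case_tac v; case_tac c) auto
  have sww: "\<And>v. wins (v \<noteq> True) (prod.swap ` board n n) = wins v (board n n)"
    using wins_iso[OF injsw domsw _ finite_board] by simp
  have swb: "prod.swap ` board n n = board n n"
  proof (rule set_eqI)
    fix c :: "nat \<times> nat"
    obtain i j where c: "c = (i, j)" by (cases c)
    have "(i, j) \<in> prod.swap ` board n n \<longleftrightarrow> (j, i) \<in> board n n"
      by (metis image_eqI prod.swap_def swap_simp swap_swap imageE)
    then show "c \<in> prod.swap ` board n n \<longleftrightarrow> c \<in> board n n"
      unfolding c board_def by auto
  qed
  have sym: "wins True (board n n) = wins False (board n n)"
    using sww[of False] swb by simp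
  have decomp: "board n n = board m n \<union> sh ` board (n - m) n"
  proof
    show "board n n \<subseteq> board m n \<union> sh ` board (n - m) n"
    proof
      fix c assume c: "c \<in> board n n"
      show "c \<in> board m n \<union> sh ` board (n - m) n"
      proof (cases "fst c < m")
        case True then show ?thesis using c unfolding board_def by auto
      next
        case False
        then have "c = sh (fst c - m, snd c)" unfolding sh_def by auto
        moreover have "(fst c - m, snd c) \<in> board (n - m) n" using c False unfolding board_def by auto
        ultimately show ?thesis by blast
      qed
    qed
  next
    show "board m n \<union> sh ` board (n - m) n \<subseteq> board n n"
      using assms(2) unfolding board_def sh_def by auto
  qed
  have XU: "board m n \<subseteq> U m" unfolding board_def U_def by auto
  have YU: "sh ` board (n - m) n \<inter> U m = {}" unfolding sh_def U_def by auto
  have fY: "finite (sh ` board (n - m) n)" using finite_board by simp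
  note S = sum_lemma[OF finite_board fY XU YU]
  have h1: "\<not> wins False (board m n)" using assms(3)
    unfolding outcome_2nd_def outcome_V_def hep_first_wins_def by blast
  have h2: "wins True (sh ` board (n - m) n)" "\<not> wins False (sh ` board (n - m) n)"
    using V shw unfolding outcome_V_def vera_first_wins_def hep_first_wins_def by auto
  have "wins True (board n n)" "\<not> wins False (board n n)"
    unfolding decomp using S h1 h2 by blast+
  then show False using sym by simp
qed

end
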